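(* Suppose each $f_i$ is continuously differentiable and there exist $\mu>0$, $L>0$ with $-L\le\frac1{M_i}f_i'(w)\le-\mu$ for all $i$ and all $w\in\mathbb R$. Let $\omega_b$ solve the blended dynamics and let $\tilde f(t):=Y^TM^{-1/2}\big(f(\mathbb 1_N\omega_b(t))+\xi(t)\big)$. If $C:=\max_{i}\sup_{t>0}|\dot\xi_i(t)|/M_i$ is finite, then for all $t>0$, $$\Big|\frac{d\tilde f}{dt}\Big|^2\le 2NM_bC^2\Big(1+\frac L\mu\Big)^2+\frac{2NL^2}{M_b}\,|f_b(\omega_b(0))+\xi_b(0_+)|^2e^{-2\mu t}.$$ If $C_{\lim}:=\max_i\limsup_{t\to\infty}|\dot\xi_i(t)|/M_i$ is finite, then $$\limsup_{t\to\infty}\Big|\frac{d\tilde f}{dt}\Big|^2\le 2NM_bC_{\lim}^2\Big(1+\frac L\mu\Big)^2.$$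
   Context: $N\ge2$ nodes with $M_i>0$, $M=\mathrm{diag}(M_1,\dots,M_N)$, $M_b=\frac1N\sum_iM_i$; functions $f_i:\mathbb R\to\mathbb R$ with $f_i(0)=0$, $f(\omega)=(f_1(\omega_1),\dots,f_N(\omega_N))^T$, $f_b(w)=\frac1N\sum_if_i(w)$. Disturbances $\xi=(\xi_1,\dots,\xi_N)^T$ are continuously differentiable on $(0,\infty)$, possibly with a finite jump at $t=0$ ($\xi(0_+)$ the right limit); $\xi_b=\frac1N\sum_i\xi_i$. The blended dynamics is the scalar ODE $M_b\dot\omega_b=f_b(\omega_b)+\xi_b(t)$ with some initial value $\omega_b(0)$. $\mathbb 1_N$ is the all-ones vector, and $Y\in\mathbb R^{N\times(N-1)}$ is a matrix whose columns form an orthonormal basis of the null space of $\mathbb 1_N^TM^{1/2}$. $|\cdot|$ is the Euclidean norm. *)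

theory Defs
  imports "HOL-Analysis.Analysis"
begin

text \<open>Nodes are indexed by 0..N-1; the columns of Y by 0..N-2.
  Vectors/matrices are functions nat => real with explicit bounds.\<close>

definition avg :: "nat \<Rightarrow> (nat \<Rightarrow> real) \<Rightarrow> real" where
  "avg N g = (\<Sum>i<N. g i) / real N"

text \<open>Y has orthonormal columns spanning the null space of 1^T M^(1/2)
  (N-1 orthonormal vectors in an (N-1)-dimensional space form a basis).\<close>
definition Y_basis :: "nat \<Rightarrow> (nat \<Rightarrow> real) \<Rightarrow> (nat \<Rightarrow> nat \<Rightarrow> real) \<Rightarrow> bool" where
  "Y_basis N M Y \<longleftrightarrow>
     (\<forall>k<N-1. \<forall>l<N-1. (\<Sum>i<N. Y i k * Y i l) = (if k = l then 1 else 0)) \<and>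
     (\<forall>k<N-1. (\<Sum>i<N. sqrt (M i) * Y i k) = 0)"

definition ftilde_comp :: "nat \<Rightarrow> (nat \<Rightarrow> real) \<Rightarrow> (nat \<Rightarrow> nat \<Rightarrow> real)
     \<Rightarrow> (nat \<Rightarrow> real \<Rightarrow> real) \<Rightarrow> real \<Rightarrow> (nat \<Rightarrow> real) \<Rightarrow> nat \<Rightarrow> real" where
  "ftilde_comp N M Y f w x k = (\<Sum>i<N. Y i k * (f i w + x i) / sqrt (M i))"

end

theory Submission imports Defs begin

lemma cmp_upper:
  fixes z z' :: "real \<Rightarrow> real"
  assumes mu: "\<mu> > 0" and B: "B \<ge> 0"
    and der: "\<forall>t>T. (z has_real_derivative z' t) (at t)"
    and lim: "(z \<longlongrightarrow> z0) (at_right T)"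
    and ineq: "\<forall>t>T. z t > 0 \<longrightarrow> z' t \<le> - \<mu> * z t + B"
    and t1: "t1 > T"
  shows "z t1 \<le> \<bar>z0\<bar> * exp (- \<mu> * (t1 - T)) + B / \<mu>"
proof (rule ccontr)
  define U where "U t = z t - (\<bar>z0\<bar> * exp (- \<mu> * (t - T)) + B / \<mu>)" for t
  assume "\<not> ?thesis"
  hence U1: "U t1 > 0" by (simp add: U_def)
  have dU: "(U has_real_derivative (z' t + \<mu> * \<bar>z0\<bar> * exp (- \<mu> * (t - T)))) (at t)" if "t > T" for t
    unfolding U_def using der that
    by (auto intro!: derivative_eq_intros)
  have limU: "(U \<longlongrightarrow> z0 - (\<bar>z0\<bar> + B / \<mu>)) (at_right T)"
    unfolding U_def by (auto intro!: tendsto_eq_intros lim)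
  have Bm: "B / \<mu> \<ge> 0" using B mu by simp
  have "z0 - (\<bar>z0\<bar> + B / \<mu>) < U t1" using U1 Bm abs_ge_self[of z0] by linarith
  hence "eventually (\<lambda>t. U t < U t1) (at_right T)"
    using limU order_tendstoD(2) by blast
  then obtain b where b: "b > T" "\<And>y. y > T \<Longrightarrow> y < b \<Longrightarrow> U y < U t1"
    by (auto simp: eventually_at_right_field)
  define T' where "T' = min ((T + b) / 2) ((T + t1) / 2)"
  have T'a: "T < T'" "T' < t1" "T' < b" using b t1 by (auto simp: T'_def min_def)
  have T': "T < T'" "T' < t1" "U T' < U t1" using T'a b by auto
  have "continuous_on {T'..t1} U"
  proof (intro continuous_at_imp_continuous_on ballI)
    fix x assume "x \<in> {T'..t1}"
    hence "x > T" using T' by auto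
    from DERIV_isCont[OF dU[OF this]] show "isCont U x" .
  qed
  then obtain p where p: "p \<in> {T'..t1}" "\<And>y. y \<in> {T'..t1} \<Longrightarrow> U y \<le> U p"
    using continuous_attains_sup[of "{T'..t1}" U] T' by auto
  have Up: "U p \<ge> U t1" using p T' by auto
  hence pT': "p > T'" using p T' by (cases "p = T'") auto
  have "z p > 0" using Up U1 mu B unfolding U_def
    using Bm mult_nonneg_nonneg[OF abs_ge_zero[of z0] less_imp_le[OF exp_gt_zero[of "- \<mu> * (p - T)"]]] by linarith
  hence "z' p \<le> - \<mu> * z p + B" using ineq pT' T' by auto
  hence neg: "z' p + \<mu> * \<bar>z0\<bar> * exp (- \<mu> * (p - T)) < 0"
  proof -
    have "\<mu> * U p > 0" using Up U1 mu by simp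
    moreover have "\<mu> * U p = \<mu> * z p - \<mu> * \<bar>z0\<bar> * exp (- \<mu> * (p - T)) - B"
      unfolding U_def using mu by (simp add: algebra_simps)
    ultimately show ?thesis using \<open>z' p \<le> - \<mu> * z p + B\<close> by linarith
  qed
  obtain d where d: "d > 0" "\<And>h. h > 0 \<Longrightarrow> h < d \<Longrightarrow> U p < U (p - h)"
    using DERIV_neg_dec_left[OF dU neg] pT' T' by auto
  define h where "h = min (d / 2) ((p - T') / 2)"
  have h: "h > 0" "h < d" "h \<le> (p - T') / 2" using d pT' by (auto simp: h_def min_def)
  have "U p < U (p - h)" using h by (intro d(2))
  moreover have "p - h \<in> {T'..t1}" using h pT' p by auto
  ultimately show False using p(2) by fastforce
qed

lemma cmp_abs:
  fixes z z' a b :: "real \<Rightarrow> real"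
  assumes mu: "\<mu> > 0" and B: "B \<ge> 0"
    and der: "\<forall>t>T. (z has_real_derivative z' t) (at t)"
    and lim: "(z \<longlongrightarrow> z0) (at_right T)"
    and a: "\<forall>t>T. a t \<le> - \<mu>" and b: "\<forall>t>T. \<bar>b t\<bar> \<le> B"
    and eq: "\<forall>t>T. z' t = a t * z t + b t"
    and t1: "t1 > T"
  shows "\<bar>z t1\<bar> \<le> \<bar>z0\<bar> * exp (- \<mu> * (t1 - T)) + B / \<mu>"
proof -
  have "z t1 \<le> \<bar>z0\<bar> * exp (- \<mu> * (t1 - T)) + B / \<mu>"
  proof (rule cmp_upper[OF mu B der lim _ t1], intro allI impI)
    fix t assume t: "t > T" "z t > 0"
    have "a t * z t \<le> - \<mu> * z t" using a t by (intro mult_right_mono) auto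
    moreover have "b t \<le> B" using b t by force
    ultimately show "z' t \<le> - \<mu> * z t + B" using eq t by auto
  qed
  moreover have "- z t1 \<le> \<bar>- z0\<bar> * exp (- \<mu> * (t1 - T)) + B / \<mu>"
  proof -
    have i: "\<forall>t>T. - z t > 0 \<longrightarrow> - z' t \<le> - \<mu> * (- z t) + B"
    proof (intro allI impI)
      fix t assume t: "t > T" "- z t > 0"
      have "a t * (- z t) \<le> - \<mu> * (- z t)" using a t by (intro mult_right_mono) auto
      moreover have "- b t \<le> B" using b t by force
      ultimately show "- z' t \<le> - \<mu> * (- z t) + B" using eq t by auto
    qed
    have d: "\<forall>t>T. ((\<lambda>t. - z t) has_real_derivative - z' t) (at t)"
      using der by (auto intro: DERIV_minus)
    have l: "((\<lambda>t. - z t) \<longlongrightarrow> - z0) (at_right T)" using lim by (rule tendsto_minus)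
    show ?thesis using cmp_upper[OF mu B d l i t1] by simp
  qed
  ultimately show ?thesis by simp
qed

lemma bessel:
  fixes Y :: "nat \<Rightarrow> nat \<Rightarrow> real" and v :: "nat \<Rightarrow> real"
  assumes orth: "\<forall>k<K. \<forall>l<K. (\<Sum>i<N. Y i k * Y i l) = (if k = l then 1 else 0)"
  shows "(\<Sum>k<K. (\<Sum>i<N. Y i k * v i)\<^sup>2) \<le> (\<Sum>i<N. (v i)\<^sup>2)"
proof -
  define c where "c k = (\<Sum>i<N. Y i k * v i)" for k
  have "(\<Sum>i<N. v i * (\<Sum>k<K. c k * Y i k)) = (\<Sum>i<N. \<Sum>k<K. c k * (Y i k * v i))"
    by (simp add: sum_distrib_left mult_ac)
  also have "\<dots> = (\<Sum>k<K. \<Sum>i<N. c k * (Y i k * v i))" by (rule sum.swap)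
  also have "\<dots> = (\<Sum>k<K. c k * (\<Sum>i<N. Y i k * v i))" by (simp add: sum_distrib_left)
  also have "\<dots> = (\<Sum>k<K. (c k)\<^sup>2)" by (simp add: c_def power2_eq_square)
  finally have 1: "(\<Sum>i<N. v i * (\<Sum>k<K. c k * Y i k)) = (\<Sum>k<K. (c k)\<^sup>2)" .
  have "(\<Sum>i<N. (\<Sum>k<K. c k * Y i k)\<^sup>2) = (\<Sum>i<N. \<Sum>k<K. \<Sum>l<K. c k * c l * (Y i k * Y i l))"
    by (simp add: power2_eq_square sum_product mult_ac)
  also have "\<dots> = (\<Sum>k<K. \<Sum>i<N. \<Sum>l<K. c k * c l * (Y i k * Y i l))" by (rule sum.swap)
  also have "\<dots> = (\<Sum>k<K. \<Sum>l<K. \<Sum>i<N. c k * c l * (Y i k * Y i l))"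
    by (intro sum.cong refl sum.swap)
  also have "\<dots> = (\<Sum>k<K. \<Sum>l<K. c k * c l * (\<Sum>i<N. Y i k * Y i l))"
    by (simp add: sum_distrib_left)
  also have "\<dots> = (\<Sum>k<K. \<Sum>l<K. if k = l then c k * c l else 0)"
    using orth by (intro sum.cong refl) auto
  also have "\<dots> = (\<Sum>k<K. (c k)\<^sup>2)"
    by (simp add: power2_eq_square)
  finally have 2: "(\<Sum>i<N. (\<Sum>k<K. c k * Y i k)\<^sup>2) = (\<Sum>k<K. (c k)\<^sup>2)" .
  have "0 \<le> (\<Sum>i<N. (v i - (\<Sum>k<K. c k * Y i k))\<^sup>2)" by (intro sum_nonneg) auto
  also have "\<dots> = (\<Sum>i<N. (v i)\<^sup>2) - 2 * (\<Sum>i<N. v i * (\<Sum>k<K. c k * Y i k)) + (\<Sum>i<N. (\<Sum>k<K. c k * Y i k)\<^sup>2)"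
    by (simp add: power2_diff sum.distrib sum_subtractf sum_distrib_left mult_ac)
  finally have "0 \<le> (\<Sum>i<N. (v i)\<^sup>2) - 2 * (\<Sum>k<K. (c k)\<^sup>2) + (\<Sum>k<K. (c k)\<^sup>2)"
    unfolding 1 2 .
  thus ?thesis by (simp add: c_def)
qed

lemma sq_le: "((x::real) + y)\<^sup>2 \<le> 2 * x\<^sup>2 + 2 * y\<^sup>2"
proof -
  have "(x+y)\<^sup>2 + (x-y)\<^sup>2 = 2 * x\<^sup>2 + 2 * y\<^sup>2" by (simp add: power2_eq_square algebra_simps)
  moreover have "(x-y)\<^sup>2 \<ge> 0" by simp
  ultimately show ?thesis by linarith
qed

lemma alg:
  fixes Mb \<mu> N L r e c :: real
  assumes "Mb > 0" "\<mu> > 0" "N \<ge> 0"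
  shows "N * Mb * (L * (r * e + c * Mb / \<mu>) / Mb + c)\<^sup>2
     \<le> 2 * N * Mb * c\<^sup>2 * (1 + L / \<mu>)\<^sup>2 + 2 * N * L\<^sup>2 / Mb * r\<^sup>2 * e\<^sup>2"
proof -
  have eq: "L * (r * e + c * Mb / \<mu>) / Mb + c = c * (1 + L / \<mu>) + L * r * e / Mb"
    using assms by (simp add: field_simps)
  have "(c * (1 + L / \<mu>) + L * r * e / Mb)\<^sup>2 \<le> 2 * (c * (1 + L / \<mu>))\<^sup>2 + 2 * (L * r * e / Mb)\<^sup>2"
    by (rule sq_le)
  hence "N * Mb * (c * (1 + L / \<mu>) + L * r * e / Mb)\<^sup>2 \<le> N * Mb * (2 * (c * (1 + L / \<mu>))\<^sup>2 + 2 * (L * r * e / Mb)\<^sup>2)"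
    using assms by (intro mult_left_mono) auto
  also have "\<dots> = 2 * N * Mb * c\<^sup>2 * (1 + L / \<mu>)\<^sup>2 + 2 * N * L\<^sup>2 / Mb * r\<^sup>2 * e\<^sup>2"
    using assms by (simp add: field_simps power2_eq_square)
  finally show ?thesis unfolding eq .
qed

lemma exp_lim:
  fixes \<mu> T :: real assumes "\<mu> > 0"
  shows "((\<lambda>t. exp (- 2 * \<mu> * (t - T))) \<longlongrightarrow> 0) at_top"
proof -
  have "filterlim (\<lambda>t. (- T) + t) at_top at_top"
    by (rule filterlim_tendsto_add_at_top[OF tendsto_const filterlim_ident])
  hence "filterlim (\<lambda>t. t - T) at_top at_top" by (simp add: add.commute)
  hence "filterlim (\<lambda>t. (- 2 * \<mu>) * (t - T)) at_bot at_top"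
    using assms by (intro filterlim_tendsto_neg_mult_at_bot[OF tendsto_const]) auto
  from filterlim_compose[OF exp_at_bot this] show ?thesis by (simp add: o_def)
qed

theorem lemmaA1:
  fixes N :: nat and M :: "nat \<Rightarrow> real" and Y :: "nat \<Rightarrow> nat \<Rightarrow> real"
    and f f' :: "nat \<Rightarrow> real \<Rightarrow> real"
    and \<xi> \<xi>' :: "nat \<Rightarrow> real \<Rightarrow> real" and \<xi>0 :: "nat \<Rightarrow> real"
    and \<omega>b :: "real \<Rightarrow> real" and \<mu> L :: real
  assumes N: "N \<ge> 2"
    and Mpos: "\<forall>i<N. M i > 0"
    and Y: "Y_basis N M Y"
    and f0: "\<forall>i<N. f i 0 = 0"
    and fderiv: "\<forall>i<N. \<forall>w. (f i has_real_derivative f' i w) (at w)"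
    and fcont: "\<forall>i<N. continuous_on UNIV (f' i)"
    and \<mu>: "\<mu> > 0" and L: "L > 0"
    and fbounds: "\<forall>i<N. \<forall>w. - L \<le> f' i w / M i \<and> f' i w / M i \<le> - \<mu>"
    and \<xi>deriv: "\<forall>i<N. \<forall>t>0. (\<xi> i has_real_derivative \<xi>' i t) (at t)"
    and \<xi>cont: "\<forall>i<N. continuous_on {0<..} (\<xi>' i)"
    and \<xi>jump: "\<forall>i<N. (\<xi> i \<longlongrightarrow> \<xi>0 i) (at_right 0)"
    and \<omega>cont: "continuous_on {0..} \<omega>b"
    and \<omega>ode: "\<forall>t>0. (\<omega>b has_real_derivative
                  (avg N (\<lambda>i. f i (\<omega>b t)) + avg N (\<lambda>i. \<xi> i t)) / avg N M) (at t)"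
  shows
   "(let C = Max ((\<lambda>i. SUP t\<in>{0<..}. ereal (\<bar>\<xi>' i t\<bar> / M i)) ` {..<N}) in
      C < \<infinity> \<longrightarrow>
      (\<forall>t>0. (\<Sum>k<N-1. (deriv (\<lambda>s. ftilde_comp N M Y f (\<omega>b s) (\<lambda>i. \<xi> i s) k) t)\<^sup>2)
         \<le> 2 * real N * avg N M * (real_of_ereal C)\<^sup>2 * (1 + L / \<mu>)\<^sup>2
           + 2 * real N * L\<^sup>2 / avg N M
             * \<bar>avg N (\<lambda>i. f i (\<omega>b 0)) + avg N \<xi>0\<bar>\<^sup>2 * exp (- 2 * \<mu> * t)))
    \<and>
    (let Clim = Max ((\<lambda>i. Limsup at_top (\<lambda>t. ereal (\<bar>\<xi>' i t\<bar> / M i))) ` {..<N}) in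
      Clim < \<infinity> \<longrightarrow>
      Limsup at_top (\<lambda>t. ereal (\<Sum>k<N-1.
          (deriv (\<lambda>s. ftilde_comp N M Y f (\<omega>b s) (\<lambda>i. \<xi> i s) k) t)\<^sup>2))
        \<le> ereal (2 * real N * avg N M * (real_of_ereal Clim)\<^sup>2 * (1 + L / \<mu>)\<^sup>2))"
proof -
  define Mb where "Mb = avg N M"
  define z where "z t = avg N (\<lambda>i. f i (\<omega>b t)) + avg N (\<lambda>i. \<xi> i t)" for t
  define a where "a t = avg N (\<lambda>i. f' i (\<omega>b t)) / Mb" for t
  define b where "b t = avg N (\<lambda>i. \<xi>' i t)" for t
  define D where "D t k = deriv (\<lambda>s. ftilde_comp N M Y f (\<omega>b s) (\<lambda>i. \<xi> i s) k) t" for t k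
  have Npos: "real N > 0" using N by simp
  have sumM: "(\<Sum>i<N. M i) = real N * Mb" using Npos by (simp add: Mb_def avg_def)
  have ne: "{..<N} \<noteq> {}" using N by (simp add: lessThan_empty_iff)
  have "(\<Sum>i<N. M i) > 0" using Mpos ne by (intro sum_pos) auto
  hence Mbpos: "Mb > 0" using sumM Npos by (simp add: zero_less_mult_iff)
  have f'bd: "f' i w \<le> - \<mu> * M i \<and> \<bar>f' i w\<bar> \<le> L * M i" if "i < N" for i w
  proof -
    have Mi: "M i > 0" using Mpos that by auto
    have 1: "f' i w \<le> - \<mu> * M i" using fbounds that Mi by (auto simp: pos_divide_le_eq)
    have 2: "- L * M i \<le> f' i w" using fbounds that Mi by (auto simp: pos_le_divide_eq)
    have "- \<mu> * M i < 0" using \<mu> Mi by simp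
    thus ?thesis using 1 2 by auto
  qed
  have a_le: "a t \<le> - \<mu>" for t
  proof -
    have "(\<Sum>i<N. f' i (\<omega>b t)) \<le> (\<Sum>i<N. - \<mu> * M i)"
      using f'bd by (intro sum_mono) auto
    also have "\<dots> = - \<mu> * (real N * Mb)" by (simp add: sum_negf sum_distrib_left[symmetric] sumM)
    finally have "(\<Sum>i<N. f' i (\<omega>b t)) / real N / Mb \<le> - \<mu> * (real N * Mb) / real N / Mb"
      using Npos Mbpos by (intro divide_right_mono) auto
    thus ?thesis using Npos Mbpos by (simp add: a_def avg_def)
  qed
  have \<omega>d: "(\<omega>b has_real_derivative z t / Mb) (at t)" if "t > 0" for t
    using \<omega>ode that by (simp add: z_def Mb_def)
  have zd: "(z has_real_derivative a t * z t + b t) (at t)" if t: "t > 0" for t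
  proof -
    have 1: "((\<lambda>s. \<Sum>i<N. f i (\<omega>b s)) has_real_derivative (\<Sum>i<N. f' i (\<omega>b t) * (z t / Mb))) (at t)"
      by (rule DERIV_sum, rule DERIV_chain2[OF _ \<omega>d[OF t]]) (use fderiv in auto)
    have 2: "((\<lambda>s. \<Sum>i<N. \<xi> i s) has_real_derivative (\<Sum>i<N. \<xi>' i t)) (at t)"
      by (rule DERIV_sum) (use \<xi>deriv t in auto)
    have zeq: "z = (\<lambda>s. (\<Sum>i<N. f i (\<omega>b s)) / real N + (\<Sum>i<N. \<xi> i s) / real N)"
      by (simp add: fun_eq_iff z_def avg_def)
    have "((\<lambda>s. (\<Sum>i<N. f i (\<omega>b s)) / real N + (\<Sum>i<N. \<xi> i s) / real N) has_real_derivative (\<Sum>i<N. f' i (\<omega>b t) * (z t / Mb)) / real N + (\<Sum>i<N. \<xi>' i t) / real N) (at t)"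
      by (intro DERIV_add DERIV_cdivide 1 2)
    hence 3: "(z has_real_derivative (\<Sum>i<N. f' i (\<omega>b t) * (z t / Mb)) / real N + (\<Sum>i<N. \<xi>' i t) / real N) (at t)"
      unfolding zeq[symmetric] .
    have "(\<Sum>i<N. f' i (\<omega>b t) * (z t / Mb)) / real N + (\<Sum>i<N. \<xi>' i t) / real N = a t * z t + b t"
      unfolding a_def b_def avg_def sum_distrib_right[symmetric] using Npos Mbpos by (simp add: field_simps)
    with 3 show ?thesis by simp
  qed
  have Dval: "D t k = (\<Sum>i<N. Y i k * ((f' i (\<omega>b t) * (z t / Mb) + \<xi>' i t) / sqrt (M i)))"
    if t: "t > 0" for t k
  proof -
    have "((\<lambda>s. ftilde_comp N M Y f (\<omega>b s) (\<lambda>i. \<xi> i s) k) has_real_derivative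
        (\<Sum>i<N. Y i k * (f' i (\<omega>b t) * (z t / Mb) + \<xi>' i t) / sqrt (M i))) (at t)"
      unfolding ftilde_comp_def
    proof (rule DERIV_sum)
      fix i assume "i \<in> {..<N}"
      hence i: "i < N" by simp
      have "((\<lambda>s. f i (\<omega>b s)) has_real_derivative f' i (\<omega>b t) * (z t / Mb)) (at t)"
        by (rule DERIV_chain2[OF _ \<omega>d[OF t]]) (use fderiv i in auto)
      moreover have "(\<xi> i has_real_derivative \<xi>' i t) (at t)" using \<xi>deriv i t by auto
      ultimately show "((\<lambda>s. Y i k * (f i (\<omega>b s) + \<xi> i s) / sqrt (M i)) has_real_derivative
          Y i k * (f' i (\<omega>b t) * (z t / Mb) + \<xi>' i t) / sqrt (M i)) (at t)"
        by (intro DERIV_cdivide DERIV_cmult DERIV_add)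
    qed
    from DERIV_imp_deriv[OF this] show ?thesis by (simp add: D_def)
  qed
  have core: "(\<Sum>k<N-1. (D t k)\<^sup>2) \<le> real N * Mb * (L * R / Mb + c)\<^sup>2"
    if t: "t > 0" and xb: "\<forall>i<N. \<bar>\<xi>' i t\<bar> / M i \<le> c" and zb: "\<bar>z t\<bar> \<le> R" for t c R
  proof -
    define v where "v i = (f' i (\<omega>b t) * (z t / Mb) + \<xi>' i t) / sqrt (M i)" for i
    have orth: "\<forall>k<N-1. \<forall>l<N-1. (\<Sum>i<N. Y i k * Y i l) = (if k = l then 1 else 0)"
      using Y by (simp add: Y_basis_def)
    have "(\<Sum>k<N-1. (D t k)\<^sup>2) = (\<Sum>k<N-1. (\<Sum>i<N. Y i k * v i)\<^sup>2)"
      using Dval[OF t] by (simp add: v_def)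
    also have "\<dots> \<le> (\<Sum>i<N. (v i)\<^sup>2)" by (rule bessel[OF orth])
    also have "\<dots> \<le> (\<Sum>i<N. M i * (L * R / Mb + c)\<^sup>2)"
    proof (rule sum_mono)
      fix i assume "i \<in> {..<N}"
      hence i: "i < N" by simp
      have Mi: "M i > 0" using Mpos i by auto
      define w where "w = f' i (\<omega>b t) * (z t / Mb) + \<xi>' i t"
      have R0: "R \<ge> 0" using zb by linarith
      have "\<bar>\<xi>' i t\<bar> \<le> c * M i" using xb i Mi by (auto simp: pos_divide_le_eq)
      moreover have "\<bar>f' i (\<omega>b t) * (z t / Mb)\<bar> \<le> (L * M i) * (R / Mb)"
        unfolding abs_mult using f'bd[OF i] zb Mbpos R0 L Mi
        by (intro mult_mono) (auto simp: divide_right_mono)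
      moreover have "\<bar>w\<bar> \<le> \<bar>f' i (\<omega>b t) * (z t / Mb)\<bar> + \<bar>\<xi>' i t\<bar>"
        unfolding w_def by (rule abs_triangle_ineq)
      moreover have "M i * (L * R / Mb + c) = (L * M i) * (R / Mb) + c * M i"
        by (simp add: algebra_simps)
      ultimately have "\<bar>w\<bar> \<le> M i * (L * R / Mb + c)" by linarith
      hence "\<bar>w\<bar>\<^sup>2 \<le> (M i * (L * R / Mb + c))\<^sup>2" by (intro power_mono) auto
      hence "w\<^sup>2 / M i \<le> (M i * (L * R / Mb + c))\<^sup>2 / M i"
        using Mi by (intro divide_right_mono) auto
      also have "\<dots> = M i * (L * R / Mb + c)\<^sup>2" using Mi by (simp add: power2_eq_square)
      finally have "w\<^sup>2 / M i \<le> M i * (L * R / Mb + c)\<^sup>2" .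
      moreover have "(v i)\<^sup>2 = w\<^sup>2 / M i"
        unfolding v_def w_def[symmetric] using Mi by (simp add: power_divide)
      ultimately show "(v i)\<^sup>2 \<le> M i * (L * R / Mb + c)\<^sup>2" by simp
    qed
    also have "\<dots> = real N * Mb * (L * R / Mb + c)\<^sup>2"
      by (simp add: sum_distrib_right[symmetric] sumM)
    finally show ?thesis .
  qed
  have gen: "(\<Sum>k<N-1. (D t k)\<^sup>2) \<le> 2 * real N * Mb * c\<^sup>2 * (1 + L / \<mu>)\<^sup>2
      + 2 * real N * L\<^sup>2 / Mb * \<bar>z0\<bar>\<^sup>2 * exp (- 2 * \<mu> * (t - T))"
    if T0: "T \<ge> 0" and tT: "t > T" and c0: "c \<ge> 0"
      and xb: "\<forall>s>T. \<forall>i<N. \<bar>\<xi>' i s\<bar> / M i \<le> c" and lim: "(z \<longlongrightarrow> z0) (at_right T)"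
    for T t c z0
  proof -
    have bb: "\<forall>s>T. \<bar>b s\<bar> \<le> c * Mb"
    proof (intro allI impI)
      fix s assume s: "s > T"
      have "\<bar>\<Sum>i<N. \<xi>' i s\<bar> \<le> (\<Sum>i<N. \<bar>\<xi>' i s\<bar>)" by (rule sum_abs)
      also have "\<dots> \<le> (\<Sum>i<N. c * M i)"
      proof (rule sum_mono)
        fix i assume "i \<in> {..<N}"
        hence i: "i < N" by simp
        have Mi: "M i > 0" using Mpos i by auto
        have "\<bar>\<xi>' i s\<bar> / M i \<le> c" using xb s i by auto
        thus "\<bar>\<xi>' i s\<bar> \<le> c * M i" using Mi by (simp add: pos_divide_le_eq)
      qed
      also have "\<dots> = c * (real N * Mb)" by (simp add: sum_distrib_left[symmetric] sumM)
      finally have "\<bar>\<Sum>i<N. \<xi>' i s\<bar> / real N \<le> c * (real N * Mb) / real N"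
        using Npos by (intro divide_right_mono) auto
      thus "\<bar>b s\<bar> \<le> c * Mb" using Npos by (simp add: b_def avg_def)
    qed
    have zd': "\<forall>s>T. (z has_real_derivative a s * z s + b s) (at s)" using zd T0 by auto
    have B0: "c * Mb \<ge> 0" using c0 Mbpos by simp
    have zb: "\<bar>z t\<bar> \<le> \<bar>z0\<bar> * exp (- \<mu> * (t - T)) + c * Mb / \<mu>"
      by (rule cmp_abs[OF \<mu> B0 zd' lim _ bb _ tT, where a = a]) (use a_le in auto)
    have xbt: "\<forall>i<N. \<bar>\<xi>' i t\<bar> / M i \<le> c" using xb tT by auto
    have "(\<Sum>k<N-1. (D t k)\<^sup>2) \<le> real N * Mb * (L * (\<bar>z0\<bar> * exp (- \<mu> * (t - T)) + c * Mb / \<mu>) / Mb + c)\<^sup>2"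
      using core[OF _ xbt zb] tT T0 by auto
    also have "\<dots> \<le> 2 * real N * Mb * c\<^sup>2 * (1 + L / \<mu>)\<^sup>2 + 2 * real N * L\<^sup>2 / Mb * \<bar>z0\<bar>\<^sup>2 * (exp (- \<mu> * (t - T)))\<^sup>2"
      by (rule alg) (use Mbpos \<mu> in auto)
    also have "(exp (- \<mu> * (t - T)))\<^sup>2 = exp (- 2 * \<mu> * (t - T))"
      by (simp add: power2_eq_square exp_add[symmetric])
    finally show ?thesis .
  qed
  define Cs where "Cs i = (SUP t\<in>{0<..}. ereal (\<bar>\<xi>' i t\<bar> / M i))" for i
  define Cl where "Cl i = Limsup at_top (\<lambda>t. ereal (\<bar>\<xi>' i t\<bar> / M i))" for i
  have eq1: "(\<lambda>i. SUP t\<in>{0<..}. ereal (\<bar>\<xi>' i t\<bar> / M i)) = Cs" by (simp add: Cs_def fun_eq_iff)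
  have eq2: "(\<lambda>i. Limsup at_top (\<lambda>t. ereal (\<bar>\<xi>' i t\<bar> / M i))) = Cl" by (simp add: Cl_def fun_eq_iff)
  have nonneg: "ereal 0 \<le> ereal (\<bar>\<xi>' i s\<bar> / M i)" if "i < N" for i s
    using Mpos that by auto
  have part1: "Max (Cs ` {..<N}) < \<infinity> \<longrightarrow> (\<forall>t>0. (\<Sum>k<N-1. (D t k)\<^sup>2) \<le>
      2 * real N * Mb * (real_of_ereal (Max (Cs ` {..<N})))\<^sup>2 * (1 + L / \<mu>)\<^sup>2
      + 2 * real N * L\<^sup>2 / Mb * \<bar>avg N (\<lambda>i. f i (\<omega>b 0)) + avg N \<xi>0\<bar>\<^sup>2 * exp (- 2 * \<mu> * t))"
  proof (intro impI allI)
    assume Cf: "Max (Cs ` {..<N}) < \<infinity>"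
    fix t :: real assume t: "t > 0"
    define CC where "CC = Max (Cs ` {..<N})"
    have ub: "ereal (\<bar>\<xi>' i s\<bar> / M i) \<le> CC" if "i < N" "s > 0" for i s
    proof -
      have "ereal (\<bar>\<xi>' i s\<bar> / M i) \<le> Cs i" unfolding Cs_def by (rule SUP_upper) (use that in auto)
      also have "Cs i \<le> CC" unfolding CC_def by (rule Max_ge) (use that in auto)
      finally show ?thesis .
    qed
    have "0 \<le> CC" using order_trans[OF nonneg ub, of 0 1] N by (auto simp: zero_ereal_def)
    then obtain c where c: "CC = ereal c" "c \<ge> 0" using Cf unfolding CC_def[symmetric]
      by (cases CC) auto
    have xb: "\<forall>s>0. \<forall>i<N. \<bar>\<xi>' i s\<bar> / M i \<le> c" using ub c by auto
    define z0 where "z0 = avg N (\<lambda>i. f i (\<omega>b 0)) + avg N \<xi>0"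
    have lim: "(z \<longlongrightarrow> z0) (at_right 0)"
    proof -
      have "(\<omega>b \<longlongrightarrow> \<omega>b 0) (at 0 within {0..})" using \<omega>cont by (simp add: continuous_on_def)
      hence w: "(\<omega>b \<longlongrightarrow> \<omega>b 0) (at_right 0)" by (rule tendsto_within_subset) auto
      have "((\<lambda>s. f i (\<omega>b s)) \<longlongrightarrow> f i (\<omega>b 0)) (at_right 0)" if "i \<in> {..<N}" for i
        by (rule isCont_tendsto_compose[OF _ w]) (use fderiv that in \<open>auto intro: DERIV_isCont\<close>)
      hence "((\<lambda>s. (\<Sum>i<N. f i (\<omega>b s)) / real N + (\<Sum>i<N. \<xi> i s) / real N) \<longlongrightarrow>
          (\<Sum>i<N. f i (\<omega>b 0)) / real N + (\<Sum>i<N. \<xi>0 i) / real N) (at_right 0)"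
        using \<xi>jump N by (intro tendsto_add tendsto_divide tendsto_sum tendsto_const) auto
      thus ?thesis by (simp add: z_def[abs_def] z0_def avg_def)
    qed
    have "(\<Sum>k<N-1. (D t k)\<^sup>2) \<le> 2 * real N * Mb * c\<^sup>2 * (1 + L / \<mu>)\<^sup>2
      + 2 * real N * L\<^sup>2 / Mb * \<bar>z0\<bar>\<^sup>2 * exp (- 2 * \<mu> * (t - 0))"
      by (rule gen[OF _ t c(2) xb lim]) simp
    thus "(\<Sum>k<N-1. (D t k)\<^sup>2) \<le>
      2 * real N * Mb * (real_of_ereal (Max (Cs ` {..<N})))\<^sup>2 * (1 + L / \<mu>)\<^sup>2
      + 2 * real N * L\<^sup>2 / Mb * \<bar>avg N (\<lambda>i. f i (\<omega>b 0)) + avg N \<xi>0\<bar>\<^sup>2 * exp (- 2 * \<mu> * t)"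
      using c by (simp add: CC_def[symmetric] z0_def)
  qed
  have part2: "Max (Cl ` {..<N}) < \<infinity> \<longrightarrow> Limsup at_top (\<lambda>t. ereal (\<Sum>k<N-1. (D t k)\<^sup>2))
      \<le> ereal (2 * real N * Mb * (real_of_ereal (Max (Cl ` {..<N})))\<^sup>2 * (1 + L / \<mu>)\<^sup>2)"
  proof
    assume Cf: "Max (Cl ` {..<N}) < \<infinity>"
    define CC where "CC = Max (Cl ` {..<N})"
    have ub: "Cl i \<le> CC" if "i < N" for i unfolding CC_def by (rule Max_ge) (use that in auto)
    have "0 \<le> Cl 0" unfolding Cl_def
      by (rule le_Limsup) (use nonneg[of 0] N in \<open>auto intro: always_eventually simp: zero_ereal_def\<close>)
    hence "0 \<le> CC" using ub[of 0] N by auto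
    then obtain c where c: "CC = ereal c" "c \<ge> 0" using Cf unfolding CC_def[symmetric]
      by (cases CC) auto
    define tgt where "tgt = 2 * real N * Mb * c\<^sup>2 * (1 + L / \<mu>)\<^sup>2"
    have "Limsup at_top (\<lambda>t. ereal (\<Sum>k<N-1. (D t k)\<^sup>2)) \<le> ereal tgt"
    proof (rule ereal_le_epsilon2)
      fix \<delta> :: real assume \<delta>: "\<delta> > 0"
      have "((\<lambda>\<epsilon>. 2 * real N * Mb * (c + \<epsilon>)\<^sup>2 * (1 + L / \<mu>)\<^sup>2) \<longlongrightarrow>
          2 * real N * Mb * (c + 0)\<^sup>2 * (1 + L / \<mu>)\<^sup>2) (at_right 0)"
        by (intro tendsto_intros)
      moreover have "2 * real N * Mb * (c + 0)\<^sup>2 * (1 + L / \<mu>)\<^sup>2 < tgt + \<delta> / 2"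
        using \<delta> by (simp add: tgt_def)
      ultimately have "eventually (\<lambda>\<epsilon>. 2 * real N * Mb * (c + \<epsilon>)\<^sup>2 * (1 + L / \<mu>)\<^sup>2 < tgt + \<delta> / 2) (at_right 0)"
        by (rule order_tendstoD(2))
      then obtain e where e: "e > 0" "\<And>y. y > 0 \<Longrightarrow> y < e \<Longrightarrow>
          2 * real N * Mb * (c + y)\<^sup>2 * (1 + L / \<mu>)\<^sup>2 < tgt + \<delta> / 2"
        by (auto simp: eventually_at_right_field)
      define \<epsilon> where "\<epsilon> = e / 2"
      have \<epsilon>: "\<epsilon> > 0" "2 * real N * Mb * (c + \<epsilon>)\<^sup>2 * (1 + L / \<mu>)\<^sup>2 < tgt + \<delta> / 2"
        using e by (auto simp: \<epsilon>_def intro!: e(2))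
      have "\<forall>i\<in>{..<N}. eventually (\<lambda>s. \<bar>\<xi>' i s\<bar> / M i < c + \<epsilon>) at_top"
      proof
        fix i assume "i \<in> {..<N}"
        hence "Cl i \<le> ereal c" using ub[of i] c by auto
        also have "ereal c < ereal (c + \<epsilon>)" using \<epsilon> by simp
        finally have "Cl i < ereal (c + \<epsilon>)" .
        from Limsup_lessD[OF this[unfolded Cl_def]]
        show "eventually (\<lambda>s. \<bar>\<xi>' i s\<bar> / M i < c + \<epsilon>) at_top" by simp
      qed
      from eventually_ball_finite[OF _ this]
      have "eventually (\<lambda>s. \<forall>i\<in>{..<N}. \<bar>\<xi>' i s\<bar> / M i < c + \<epsilon>) at_top" by simp
      then obtain T0 where T0: "\<And>s. s \<ge> T0 \<Longrightarrow> \<forall>i\<in>{..<N}. \<bar>\<xi>' i s\<bar> / M i < c + \<epsilon>"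
        by (auto simp: eventually_at_top_linorder)
      define T where "T = max T0 1"
      have Tpos: "T > 0" by (simp add: T_def)
      have xb: "\<forall>s>T. \<forall>i<N. \<bar>\<xi>' i s\<bar> / M i \<le> c + \<epsilon>"
      proof (intro allI impI)
        fix s i assume s: "s > T" and i: "i < N"
        have "T0 \<le> s" using s by (simp add: T_def)
        moreover have "i \<in> {..<N}" using i by simp
        ultimately have "\<bar>\<xi>' i s\<bar> / M i < c + \<epsilon>" using T0 by blast
        thus "\<bar>\<xi>' i s\<bar> / M i \<le> c + \<epsilon>" by (rule less_imp_le)
      qed
      have "isCont z T" using zd[OF Tpos] by (rule DERIV_isCont)
      hence "(z \<longlongrightarrow> z T) (at T)" by (simp add: isCont_def)
      hence lim: "(z \<longlongrightarrow> z T) (at_right T)" by (simp add: filterlim_at_split)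
      define E where "E = 2 * real N * L\<^sup>2 / Mb * \<bar>z T\<bar>\<^sup>2"
      have "((\<lambda>t. E * exp (- 2 * \<mu> * (t - T))) \<longlongrightarrow> E * 0) at_top"
        by (rule tendsto_mult[OF tendsto_const exp_lim[OF \<mu>]])
      hence "eventually (\<lambda>t. E * exp (- 2 * \<mu> * (t - T)) < \<delta> / 2) at_top"
        using \<delta> by (intro order_tendstoD(2)) auto
      moreover have "eventually (\<lambda>t. t > T) at_top" by (rule eventually_gt_at_top)
      ultimately have "eventually (\<lambda>t. ereal (\<Sum>k<N-1. (D t k)\<^sup>2) \<le> ereal tgt + ereal \<delta>) at_top"
      proof eventually_elim
        case (elim t)
        have "(\<Sum>k<N-1. (D t k)\<^sup>2) \<le> 2 * real N * Mb * (c + \<epsilon>)\<^sup>2 * (1 + L / \<mu>)\<^sup>2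
            + E * exp (- 2 * \<mu> * (t - T))"
          unfolding E_def using gen[OF _ elim(2) _ xb lim] Tpos c(2) \<epsilon>(1) by auto
        thus ?case using elim(1) \<epsilon>(2) by simp
      qed
      thus "Limsup at_top (\<lambda>t. ereal (\<Sum>k<N-1. (D t k)\<^sup>2)) \<le> ereal tgt + ereal \<delta>"
        by (rule Limsup_bounded)
    qed
    thus "Limsup at_top (\<lambda>t. ereal (\<Sum>k<N-1. (D t k)\<^sup>2))
      \<le> ereal (2 * real N * Mb * (real_of_ereal (Max (Cl ` {..<N})))\<^sup>2 * (1 + L / \<mu>)\<^sup>2)"
      using c by (simp add: CC_def[symmetric] tgt_def)
  qed
  show ?thesis unfolding Let_def eq1 eq2 using part1 part2 by (simp add: D_def Mb_def)
qed

end
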